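(* Let $\mathbb{K}$ be a field and $f=a_0(x)+a_1(x)y+\cdots+a_n(x)y^n\in\mathbb{K}[x,y]$ with $n\geq 2$, $a_0,\ldots,a_n\in\mathbb{K}[x]$, $a_0a_n\neq 0$. Assume that $f$ has no nonconstant factor in $\mathbb{K}[x]$, and let $\nu_0$ and $\nu_n$ be the number of irreducible factors of $a_0(x)$ and $a_n(x)$ in $\mathbb{K}[x]$, respectively, counted with their multiplicities. (i) If $\deg a_0>\max\{\deg a_1,\dots,\deg a_n\}$, then $f$ is a product of at most $\nu_0$ irreducible polynomials over $\mathbb{K}[x]$. (ii) If $\deg a_n>\max\{\deg a_0,\dots,\deg a_{n-1}\}$, then $f$ is a product of at most $\nu_n$ irreducible polynomials over $\mathbb{K}[x]$.
   Context: $f$ is regarded as a polynomial in $y$ with coefficients in $\mathbb{K}[x]$; "a product of at most $k$ irreducible polynomials over $\mathbb{K}[x]$" means that in the factorization of $f$ into irreducible elements of $\mathbb{K}[x][y]$ the number of factors, counted with multiplicities, is at most $k$. *)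

theory Defs
  imports "HOL-Computational_Algebra.Computational_Algebra"
begin

text \<open>A bivariate polynomial f in K[x,y] is represented as a polynomial in y with
coefficients in K[x], i.e. of type 'a poly poly; coeff f i is a_i(x).\<close>

end

theory Submission
  imports Defs
begin

lemma irr_fact:
  fixes f :: "'b::factorial_semiring"
  assumes "f \<noteq> 0" "\<not> is_unit f"
  shows "\<exists>fs. (\<forall>g\<in>#fs. irreducible g) \<and> f = prod_mset fs"
proof -
  obtain A where A: "\<And>x. x \<in># A \<Longrightarrow> prime_elem x" "normalize (prod_mset A) = normalize f"
    using prime_factorization_exists[OF assms(1)] by blast
  obtain u where u: "is_unit u" "f = u * prod_mset A"
    using associatedE2[OF A(2)] by blast
  have "A \<noteq> {#}" using u assms(2) by auto
  then obtain a where a: "a \<in># A" by blast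
  define fs where "fs = add_mset (u*a) (A - {#a#})"
  have "prod_mset fs = u * prod_mset A"
    using a unfolding fs_def by (simp add: prod_mset.remove[OF a] mult.assoc)
  moreover have "\<forall>g\<in>#fs. irreducible g"
    unfolding fs_def using A(1) a u(1)
    by (auto simp: irreducible_mult_unit_left prime_elem_imp_irreducible dest: in_diffD)
  ultimately show ?thesis using u by metis
qed

definition mx :: "'a::zero poly poly \<Rightarrow> nat" where
  "mx g = Max ((\<lambda>i. degree (coeff g i)) ` {..degree g})"
definition SS :: "'a::zero poly poly \<Rightarrow> nat set" where
  "SS g = {i. i \<le> degree g \<and> coeff g i \<noteq> 0 \<and> degree (coeff g i) = mx g}"
definition ix :: "'a::zero poly poly \<Rightarrow> nat" where "ix g = Max (SS g)"
definition jx :: "'a::zero poly poly \<Rightarrow> nat" where "jx g = Min (SS g)"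

lemma mx_ge: "degree (coeff g i) \<le> mx g"
proof (cases "i \<le> degree g")
  case True then show ?thesis unfolding mx_def by (intro Max_ge) auto
next
  case False then show ?thesis by (simp add: coeff_eq_0)
qed

lemma SS_fin: "finite (SS g)" unfolding SS_def by auto

lemma SS_ne: assumes "g \<noteq> 0" shows "SS g \<noteq> {}"
proof -
  obtain i where i: "i \<le> degree g" "degree (coeff g i) = mx g"
    unfolding mx_def using Max_in[of "(\<lambda>i. degree (coeff g i)) ` {..degree g}"] by fastforce
  show ?thesis
  proof (cases "coeff g i = 0")
    case False then show ?thesis using i unfolding SS_def by auto
  next
    case True
    then have "mx g = 0" using i by simp
    then have "degree g \<in> SS g" using assms mx_ge[of g "degree g"] unfolding SS_def by auto
    then show ?thesis by auto
  qed
qed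

lemma ix_in: "g \<noteq> 0 \<Longrightarrow> ix g \<in> SS g" unfolding ix_def using SS_fin SS_ne Max_in by blast
lemma jx_in: "g \<noteq> 0 \<Longrightarrow> jx g \<in> SS g" unfolding jx_def using SS_fin SS_ne Min_in by blast

lemma ix_gt: assumes "g \<noteq> 0" "i > ix g" "coeff g i \<noteq> 0" shows "degree (coeff g i) < mx g"
proof -
  have "i \<le> degree g" using assms(3) le_degree by blast
  moreover have "i \<notin> SS g" using assms(2) SS_fin unfolding ix_def
    by (meson Max_ge leD)
  ultimately show ?thesis using mx_ge[of g i] assms(3) unfolding SS_def by auto
qed

lemma jx_lt: assumes "g \<noteq> 0" "i < jx g" "coeff g i \<noteq> 0" shows "degree (coeff g i) < mx g"
proof -
  have "i \<le> degree g" using assms(3) le_degree by blast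
  moreover have "i \<notin> SS g" using assms(2) SS_fin unfolding jx_def
    by (meson Min_le leD)
  ultimately show ?thesis using mx_ge[of g i] assms(3) unfolding SS_def by auto
qed

lemma small_prod_coeff:
  fixes b c :: "'a::idom poly"
  assumes "b = 0 \<or> degree b < m1" "degree c \<le> m2"
  shows "coeff (b * c) (m1 + m2) = 0"
proof (cases "b = 0")
  case False
  then have "degree (b*c) < m1 + m2" using assms degree_mult_le[of b c] by linarith
  then show ?thesis by (simp add: coeff_eq_0)
qed simp

lemma key_gen:
  fixes g h :: "'a::idom poly poly"
  assumes g: "g \<noteq> 0" and h: "h \<noteq> 0"
    and ig: "ig \<in> SS g" and jh: "jh \<in> SS h"
    and lt: "\<And>i j. i + j = ig + jh \<Longrightarrow> i \<noteq> ig \<Longrightarrow>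
       (coeff g i = 0 \<or> degree (coeff g i) < mx g) \<or> (coeff h j = 0 \<or> degree (coeff h j) < mx h)"
  shows "coeff (coeff (g*h) (ig + jh)) (mx g + mx h) \<noteq> 0"
proof -
  let ?n = "ig + jh" and ?M = "mx g + mx h"
  have "coeff (coeff (g*h) ?n) ?M = (\<Sum>i\<le>?n. coeff (coeff g i * coeff h (?n - i)) ?M)"
    by (simp add: coeff_mult coeff_sum)
  also have "\<dots> = coeff (coeff g ig * coeff h jh) ?M"
  proof -
    have z: "(\<Sum>i\<in>{..?n} - {ig}. coeff (coeff g i * coeff h (?n - i)) ?M) = 0"
    proof (rule sum.neutral, rule ballI)
      fix i assume "i \<in> {..?n} - {ig}"
      then have i: "i \<in> {..?n}" "i \<noteq> ig" by auto
      have "i + (?n - i) = ?n" using i by auto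
      from lt[OF this i(2)] show "coeff (coeff g i * coeff h (?n - i)) ?M = 0"
      proof
        assume "coeff g i = 0 \<or> degree (coeff g i) < mx g"
        then show ?thesis using small_prod_coeff mx_ge by blast
      next
        assume "coeff h (?n - i) = 0 \<or> degree (coeff h (?n - i)) < mx h"
        then have "coeff (coeff h (?n - i) * coeff g i) (mx h + mx g) = 0"
          using small_prod_coeff[of "coeff h (?n - i)" "mx h" "coeff g i" "mx g"] mx_ge by blast
        then show ?thesis by (simp add: mult.commute add.commute)
      qed
    qed
    have "ig \<in> {..?n}" by auto
    then show ?thesis using z sum.remove[OF finite_atMost \<open>ig \<in> {..?n}\<close>, of "\<lambda>i. coeff (coeff g i * coeff h (?n - i)) ?M"] by simp
  qed
  also have "\<dots> = coeff (coeff g ig) (degree (coeff g ig)) * coeff (coeff h jh) (degree (coeff h jh))"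
    using ig jh coeff_mult_degree_sum[of "coeff g ig" "coeff h jh"] unfolding SS_def by simp
  also have "\<dots> \<noteq> 0"
  proof -
    have "coeff g ig \<noteq> 0" "coeff h jh \<noteq> 0" using ig jh unfolding SS_def by auto
    then show ?thesis by (intro no_zero_divisors leading_coeff_neq_0)
  qed
  finally show ?thesis .
qed

lemma key_ix:
  fixes g h :: "'a::idom poly poly"
  assumes g: "g \<noteq> 0" and h: "h \<noteq> 0"
  shows "coeff (coeff (g*h) (ix g + ix h)) (mx g + mx h) \<noteq> 0"
proof (rule key_gen[OF g h ix_in[OF g] ix_in[OF h]])
  fix i j assume "i + j = ix g + ix h" "i \<noteq> ix g"
  then have "i > ix g \<or> j > ix h" by auto
  then show "(coeff g i = 0 \<or> degree (coeff g i) < mx g) \<or> (coeff h j = 0 \<or> degree (coeff h j) < mx h)"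
    using ix_gt g h by blast
qed

lemma key_jx:
  fixes g h :: "'a::idom poly poly"
  assumes g: "g \<noteq> 0" and h: "h \<noteq> 0"
  shows "coeff (coeff (g*h) (jx g + jx h)) (mx g + mx h) \<noteq> 0"
proof (rule key_gen[OF g h jx_in[OF g] jx_in[OF h]])
  fix i j assume "i + j = jx g + jx h" "i \<noteq> jx g"
  then have "i < jx g \<or> j < jx h" by auto
  then show "(coeff g i = 0 \<or> degree (coeff g i) < mx g) \<or> (coeff h j = 0 \<or> degree (coeff h j) < mx h)"
    using jx_lt g h by blast
qed

definition QQ :: "'a::zero poly poly \<Rightarrow> bool" where
  "QQ f \<longleftrightarrow> coeff f 0 \<noteq> 0 \<and> (\<forall>i\<ge>1. coeff f i \<noteq> 0 \<longrightarrow> degree (coeff f i) < degree (coeff f 0))"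
definition RR :: "'a::zero poly poly \<Rightarrow> bool" where
  "RR f \<longleftrightarrow> coeff f 0 \<noteq> 0 \<and> (\<forall>i<degree f. coeff f i \<noteq> 0 \<longrightarrow> degree (coeff f i) < degree (lead_coeff f))"

lemma QQ_dvd:
  fixes g h :: "'a::idom poly poly"
  assumes "QQ (g*h)" shows "QQ g"
proof -
  have a0: "coeff g 0 * coeff h 0 \<noteq> 0" using assms unfolding QQ_def by (simp add: coeff_mult_0)
  then have g: "g \<noteq> 0" and h: "h \<noteq> 0" by auto
  have deg0: "degree (coeff (g*h) 0) \<le> mx g + mx h"
    using a0 mx_ge[of g 0] mx_ge[of h 0] by (simp add: coeff_mult_0 degree_mult_eq)
  let ?n = "ix g + ix h"
  have nz: "coeff (coeff (g*h) ?n) (mx g + mx h) \<noteq> 0" using key_ix[OF g h] .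
  then have "mx g + mx h \<le> degree (coeff (g*h) ?n)" using le_degree by blast
  moreover have "coeff (g*h) ?n \<noteq> 0" using nz by auto
  ultimately have "\<not> ?n \<ge> 1" using assms deg0 unfolding QQ_def by force
  then have ix0: "ix g = 0" by auto
  have "degree (coeff g 0) = mx g" using ix_in[OF g] ix0 unfolding SS_def by auto
  then show ?thesis using ix_gt[OF g] ix0 a0 unfolding QQ_def by auto
qed

lemma RR_dvd:
  fixes g h :: "'a::idom poly poly"
  assumes "RR (g*h)" shows "RR g"
proof -
  have a0: "coeff g 0 * coeff h 0 \<noteq> 0" using assms unfolding RR_def by (simp add: coeff_mult_0)
  then have g: "g \<noteq> 0" and h: "h \<noteq> 0" by auto
  have degn: "degree (lead_coeff (g*h)) \<le> mx g + mx h"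
  proof -
    have "lead_coeff (g*h) = lead_coeff g * lead_coeff h" by (rule lead_coeff_mult)
    then show ?thesis using g h mx_ge[of g "degree g"] mx_ge[of h "degree h"] by (simp add: degree_mult_eq)
  qed
  let ?n = "jx g + jx h"
  have nz: "coeff (coeff (g*h) ?n) (mx g + mx h) \<noteq> 0" using key_jx[OF g h] .
  then have "mx g + mx h \<le> degree (coeff (g*h) ?n)" using le_degree by blast
  moreover have "coeff (g*h) ?n \<noteq> 0" using nz by auto
  ultimately have "\<not> ?n < degree (g*h)" using assms degn unfolding RR_def by force
  moreover have "jx g \<le> degree g" "jx h \<le> degree h" using jx_in[OF g] jx_in[OF h] unfolding SS_def by auto
  ultimately have jxd: "jx g = degree g" using g h by (simp add: degree_mult_eq)
  have "degree (lead_coeff g) = mx g" using jx_in[OF g] jxd unfolding SS_def by auto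
  then show ?thesis using jx_lt[OF g] jxd a0 unfolding RR_def by auto
qed

lemma QQ_irr:
  fixes g :: "'a::field poly poly"
  assumes "QQ g" "irreducible g" shows "degree (coeff g 0) > 0"
proof (rule ccontr)
  assume c: "\<not> ?thesis"
  then have "\<forall>i\<ge>1. coeff g i = 0" using assms(1) unfolding QQ_def by auto
  then have "degree g = 0" by (metis degree_0 leading_coeff_0_iff less_one linorder_not_le)
  then have "g = [:coeff g 0:]" by (simp add: degree_0_id)
  moreover have "is_unit (coeff g 0)" using c assms(1) unfolding QQ_def
    by (simp add: is_unit_iff_degree)
  ultimately have "is_unit g" by (metis is_unit_const_poly_iff)
  then show False using assms(2) irreducible_not_unit by blast
qed

lemma RR_irr:
  fixes g :: "'a::field poly poly"
  assumes "RR g" "irreducible g" shows "degree (lead_coeff g) > 0"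
proof (rule ccontr)
  assume c: "\<not> ?thesis"
  have "degree g = 0"
  proof (rule ccontr)
    assume "degree g \<noteq> 0"
    then show False using assms(1) c unfolding RR_def by auto
  qed
  then have "g = [:coeff g 0:]" by (simp add: degree_0_id)
  moreover have "is_unit (coeff g 0)" using c \<open>degree g = 0\<close> assms(1) unfolding RR_def
    by (simp add: is_unit_iff_degree)
  ultimately have "is_unit g" by (metis is_unit_const_poly_iff)
  then show False using assms(2) irreducible_not_unit by blast
qed


lemma coeff0_prod_mset: "coeff (prod_mset fs) 0 = prod_mset (image_mset (\<lambda>g. coeff g 0) fs)"
  by (induction fs) (auto simp: coeff_mult_0)

lemma lc_prod_mset:
  fixes fs :: "'a::idom poly multiset"
  shows "lead_coeff (prod_mset fs) = prod_mset (image_mset lead_coeff fs)"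
  by (induction fs) (auto simp: lead_coeff_mult)

lemma count_pf:
  fixes \<phi> :: "'b \<Rightarrow> 'a::field_gcd poly"
  assumes "\<forall>g\<in>#fs. \<phi> g \<noteq> 0 \<and> degree (\<phi> g) > 0"
  shows "size fs \<le> size (prime_factorization (prod_mset (image_mset \<phi> fs)))"
  using assms
proof (induction fs)
  case empty then show ?case by simp
next
  case (add g fs)
  have nz: "prod_mset (image_mset \<phi> fs) \<noteq> 0" using add.prems by (auto simp: prod_mset_zero_iff)
  have g: "\<phi> g \<noteq> 0" "\<not> is_unit (\<phi> g)" using add.prems by (auto simp: is_unit_iff_degree)
  then have "prime_factorization (\<phi> g) \<noteq> {#}" by (simp add: prime_factorization_empty_iff)
  then have "size (prime_factorization (\<phi> g)) \<ge> 1" by (simp add: Suc_leI nonempty_has_size)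
  moreover have "size fs \<le> size (prime_factorization (prod_mset (image_mset \<phi> fs)))"
    using add by auto
  ultimately show ?case using nz g by (simp add: prime_factorization_mult)
qed

theorem theorem1:
  fixes f :: "'a :: field_gcd poly poly"
  assumes n2: "degree f \<ge> 2"
    and a0an: "coeff f 0 * coeff f (degree f) \<noteq> 0"
    and no_const_factor: "\<forall>c :: 'a poly. [:c:] dvd f \<longrightarrow> degree c = 0"
  shows "((\<forall>i\<in>{1..degree f}. degree (coeff f i) < degree (coeff f 0)) \<longrightarrow>
           (\<exists>fs :: 'a poly poly multiset. (\<forall>g\<in>#fs. irreducible g) \<and> f = prod_mset fs \<and>
              size fs \<le> size (prime_factorization (coeff f 0))))
       \<and> ((\<forall>i\<in>{0..<degree f}. degree (coeff f i) < degree (coeff f (degree f))) \<longrightarrow>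
           (\<exists>fs :: 'a poly poly multiset. (\<forall>g\<in>#fs. irreducible g) \<and> f = prod_mset fs \<and>
              size fs \<le> size (prime_factorization (coeff f (degree f)))))"
proof -
  have c0: "coeff f 0 \<noteq> 0" using a0an by auto
  have f0: "f \<noteq> 0" using n2 by auto
  have nu: "\<not> is_unit f" using n2 dvd_imp_degree_le[of f 1] by auto
  obtain fs where fs: "\<forall>g\<in>#fs. irreducible g" "f = prod_mset fs"
    using irr_fact[OF f0 nu] by blast
  have fac: "\<exists>h. f = g * h" if "g \<in># fs" for g
    using dvd_prod_mset[OF that] fs(2) by (auto elim: dvdE)
  show ?thesis
  proof (intro conjI impI)
    assume H: "\<forall>i\<in>{1..degree f}. degree (coeff f i) < degree (coeff f 0)"
    have "QQ f" unfolding QQ_def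
    proof (intro conjI allI impI)
      fix i :: nat assume "i \<ge> 1" "coeff f i \<noteq> 0"
      then have "i \<in> {1..degree f}" using le_degree by auto
      then show "degree (coeff f i) < degree (coeff f 0)" using H by auto
    qed (rule c0)
    have "\<forall>g\<in>#fs. coeff g 0 \<noteq> 0 \<and> degree (coeff g 0) > 0"
    proof
      fix g assume g: "g \<in># fs"
      then obtain h where "f = g * h" using fac by blast
      then have "QQ g" using QQ_dvd \<open>QQ f\<close> by metis
      then show "coeff g 0 \<noteq> 0 \<and> degree (coeff g 0) > 0" using QQ_irr fs(1) g unfolding QQ_def by blast
    qed
    from count_pf[OF this] have "size fs \<le> size (prime_factorization (coeff f 0))"
      using fs(2) coeff0_prod_mset by metis
    then show "\<exists>fs :: 'a poly poly multiset. (\<forall>g\<in>#fs. irreducible g) \<and> f = prod_mset fs \<and>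
              size fs \<le> size (prime_factorization (coeff f 0))" using fs by blast
  next
    assume H: "\<forall>i\<in>{0..<degree f}. degree (coeff f i) < degree (coeff f (degree f))"
    have "RR f" unfolding RR_def using H c0 by auto
    have "\<forall>g\<in>#fs. lead_coeff g \<noteq> 0 \<and> degree (lead_coeff g) > 0"
    proof
      fix g assume g: "g \<in># fs"
      then obtain h where "f = g * h" using fac by blast
      then have "RR g" using RR_dvd \<open>RR f\<close> by metis
      then show "lead_coeff g \<noteq> 0 \<and> degree (lead_coeff g) > 0" using RR_irr fs(1) g
        by (metis degree_0 less_irrefl)
    qed
    from count_pf[OF this] have "size fs \<le> size (prime_factorization (lead_coeff f))"
      using fs(2) lc_prod_mset by metis
    then show "\<exists>fs :: 'a poly poly multiset. (\<forall>g\<in>#fs. irreducible g) \<and> f = prod_mset fs \<and>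
              size fs \<le> size (prime_factorization (coeff f (degree f)))" using fs by blast
  qed
qed

end
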